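(* Let $\mathcal{B}\subset\{1,\dots,K\}$. Consider two $K$-tier closed access networks (user may connect only to tiers in $\mathcal{B}$) as described in the context, identical (same point processes $\Phi_k$, powers $P_k$, target SIRs $\beta_k$, path loss exponent) except that the first has channel parameters $\{\Delta_k\},\{\Psi_k\}$ and the second $\{\Delta'_k\},\{\Psi'_k\}$. If $\Delta_k\ge\Delta'_k$ for all $k\in\mathcal{B}$ and $\Psi_k\le\Psi'_k$ for all $k\in\{1,\dots,K\}$, then the closed access coverage probability of the first network is greater than or equal to that of the second.
   Context: Downlink $K$-tier cellular network with tiers indexed by $\mathcal{K}=\{1,\dots,K\}$. Tier-$k$ base stations (BSs) are located at the points of a stationary point process $\Phi_k\subset\mathbb{R}^2$ (not necessarily independent across tiers), transmit with per-user power $P_k>0$ and have target SIR $\beta_k>0$; each tier has positive integer channel parameters $\Delta_k,\Psi_k$. $\alpha$ is the path loss exponent; a typical user is at the origin. Each BS at $x\in\Phi_k$ carries channel-power marks $h_{kx}\sim\Gamma(\Delta_k,1)$ (desired link) and $g_{kx}\sim\Gamma(\Psi_k,1)$ (interfering link), all mutually independent and independent of the point processes. $\mathrm{SIR}(x_k)=\dfrac{P_kh_{kx_k}\|x_k\|^{-\alpha}}{\sum_{j\in\mathcal{K}}\sum_{y\in\Phi_j\setminus\{x_k\}}P_jg_{jy}\|y\|^{-\alpha}}$ for $x_k\in\Phi_k$ (all tiers interfere). The closed access coverage probability with accessible tier set $\mathcal{B}$ is $\mathbb{P}\big(\bigcup_{k\in\mathcal{B}}\{\max_{x_k\in\Phi_k}\mathrm{SIR}(x_k)>\beta_k\}\big)$.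 $\Gamma(a,1)$ is the Gamma distribution with shape $a$, scale $1$. *)

theory Defs
  imports "HOL-Probability.Probability"
begin

type_synonym point = "real ^ 2"
(* a configuration assigns to each tier index k the set of tier-k BS locations *)
type_synonym config = "nat \<Rightarrow> point set"
(* mark outcome: site (k,x) \<mapsto> (h_{kx}, g_{kx}) *)
type_synonym marks = "nat \<times> point \<Rightarrow> real \<times> real"

text \<open>Gamma(a,1) distribution for a positive integer shape a (= Erlang with shape a, rate 1).\<close>
definition gamma_dist :: "nat \<Rightarrow> real measure" where
  "gamma_dist a = density lborel (erlang_density (a - 1) 1)"

definition configs :: "nat \<Rightarrow> config set" where
  "configs K = {\<phi>. (\<forall>k. k \<notin> {1..K} \<longrightarrow> \<phi> k = {}) \<and>
      (\<forall>k\<in>{1..K}. \<forall>S. bounded S \<longrightarrow> finite (\<phi> k \<inter> S))}"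

definition config_space :: "nat \<Rightarrow> config measure" where
  "config_space K = sigma (configs K)
     {{\<phi> \<in> configs K. card (\<phi> k \<inter> S) = n} | k S n.
        k \<in> {1..K} \<and> S \<in> sets borel \<and> bounded S}"

definition shift :: "point \<Rightarrow> config \<Rightarrow> config" where
  "shift v \<phi> = (\<lambda>k. (\<lambda>x. x + v) ` \<phi> k)"

definition stationary :: "nat \<Rightarrow> config measure \<Rightarrow> bool" where
  "stationary K Q \<longleftrightarrow> (\<forall>v. distr Q (config_space K) (shift v) = Q)"

definition sites :: "nat \<Rightarrow> config \<Rightarrow> (nat \<times> point) set" where
  "sites K \<phi> = {(k, x). k \<in> {1..K} \<and> x \<in> \<phi> k}"

text \<open>Conditional law of the marks given the configuration: all marks independent,
  h_{kx} ~ Gamma(Delta k,1), g_{kx} ~ Gamma(Psi k,1).\<close>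
definition mark_measure :: "nat \<Rightarrow> config \<Rightarrow> (nat \<Rightarrow> nat) \<Rightarrow> (nat \<Rightarrow> nat) \<Rightarrow> marks measure" where
  "mark_measure K \<phi> \<Delta> \<Psi> =
     PiM (sites K \<phi>) (\<lambda>(k, x). gamma_dist (\<Delta> k) \<Otimes>\<^sub>M gamma_dist (\<Psi> k))"

definition interference :: "nat \<Rightarrow> config \<Rightarrow> (nat \<Rightarrow> real) \<Rightarrow> real \<Rightarrow> marks \<Rightarrow> point \<Rightarrow> ennreal" where
  "interference K \<phi> P \<alpha> \<omega> x =
     (\<integral>\<^sup>+ jy. ennreal (P (fst jy) * snd (\<omega> jy) * norm (snd jy) powr (- \<alpha>))
        \<partial>count_space {(j, y) \<in> sites K \<phi>. y \<noteq> x})"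

definition SIR :: "nat \<Rightarrow> config \<Rightarrow> (nat \<Rightarrow> real) \<Rightarrow> real \<Rightarrow> marks \<Rightarrow> nat \<Rightarrow> point \<Rightarrow> ennreal" where
  "SIR K \<phi> P \<alpha> \<omega> k x =
     ennreal (P k * fst (\<omega> (k, x)) * norm x powr (- \<alpha>)) / interference K \<phi> P \<alpha> \<omega> x"

definition covered :: "nat \<Rightarrow> nat set \<Rightarrow> config \<Rightarrow> (nat \<Rightarrow> real) \<Rightarrow> (nat \<Rightarrow> real) \<Rightarrow> real
      \<Rightarrow> (nat \<Rightarrow> nat) \<Rightarrow> (nat \<Rightarrow> nat) \<Rightarrow> marks set" where
  "covered K \<B> \<phi> P \<beta> \<alpha> \<Delta> \<Psi> =
     {\<omega> \<in> space (mark_measure K \<phi> \<Delta> \<Psi>).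
        \<exists>k\<in>\<B>. \<exists>x\<in>\<phi> k. SIR K \<phi> P \<alpha> \<omega> k x > ennreal (\<beta> k)}"

text \<open>Closed access coverage probability: average over the point process law Q of the
  conditional (given the BS locations) probability over the independent marks.\<close>
definition coverage :: "nat \<Rightarrow> nat set \<Rightarrow> config measure \<Rightarrow> (nat \<Rightarrow> real) \<Rightarrow> (nat \<Rightarrow> real) \<Rightarrow> real
      \<Rightarrow> (nat \<Rightarrow> nat) \<Rightarrow> (nat \<Rightarrow> nat) \<Rightarrow> ennreal" where
  "coverage K \<B> Q P \<beta> \<alpha> \<Delta> \<Psi> =
     (\<integral>\<^sup>+ \<phi>. emeasure (mark_measure K \<phi> \<Delta> \<Psi>) (covered K \<B> \<phi> P \<beta> \<alpha> \<Delta> \<Psi>) \<partial>Q)"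

end

theory Submission
  imports Defs "HOL-Probability.Convolution"
begin

lemma distr_PiM_prob:
  assumes M: "\<And>i. i \<in> I \<Longrightarrow> prob_space (M i)"
    and f[measurable]: "\<And>i. i \<in> I \<Longrightarrow> f i \<in> measurable (M i) (M' i)"
  shows "distr (PiM I M) (PiM I M') (\<lambda>z. \<lambda>i\<in>I. f i (z i)) = PiM I (\<lambda>i. distr (M i) (M' i) (f i))"
proof (rule measure_eqI_PiM_infinite[where M=M'])
  have meas: "(\<lambda>z. \<lambda>i\<in>I. f i (z i)) \<in> measurable (PiM I M) (PiM I M')"
  proof (intro measurable_PiM_single')
    fix i assume i: "i \<in> I"
    show "(\<lambda>\<omega>. (\<lambda>i\<in>I. f i (\<omega> i)) i) \<in> PiM I M \<rightarrow>\<^sub>M M' i"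
      using i measurable_compose[where f="\<lambda>\<omega>. \<omega> i" and g="f i", OF measurable_component_singleton[OF i, of M] f[OF i]] by simp
  next
    show "(\<lambda>z. \<lambda>i\<in>I. f i (z i)) \<in> space (PiM I M) \<rightarrow> (\<Pi>\<^sub>E i\<in>I. space (M' i))"
      by (auto simp: space_PiM PiE_iff measurable_space[OF f])
  qed
  show "sets (distr (PiM I M) (PiM I M') (\<lambda>z. \<lambda>i\<in>I. f i (z i))) = sets (PiM I M')" by simp
  show "sets (PiM I (\<lambda>i. distr (M i) (M' i) (f i))) = sets (PiM I M')"
    by (intro sets_PiM_cong) auto
  interpret pr: prob_space "PiM I M" by (rule prob_space_PiM) (rule M)
  show "finite_measure (distr (PiM I M) (PiM I M') (\<lambda>z. \<lambda>i\<in>I. f i (z i)))"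
    using pr.prob_space_distr[OF meas] by (simp add: prob_space.finite_measure)
  fix A J assume J: "finite J" "J \<subseteq> I" and A: "\<And>i. i \<in> J \<Longrightarrow> A i \<in> sets (M' i)"
  have emb: "prod_emb I M' J (Pi\<^sub>E J A) \<in> sets (PiM I M')"
    using J A by (intro measurable_prod_emb sets_PiM_I_finite) auto
  have pre: "(\<lambda>z. \<lambda>i\<in>I. f i (z i)) -` prod_emb I M' J (Pi\<^sub>E J A) \<inter> space (PiM I M)
      = prod_emb I M J (Pi\<^sub>E J (\<lambda>i. f i -` A i \<inter> space (M i)))"
    using J measurable_space[OF f] by (auto simp: prod_emb_def space_PiM PiE_iff subset_eq)
  have "emeasure (distr (PiM I M) (PiM I M') (\<lambda>z. \<lambda>i\<in>I. f i (z i))) (prod_emb I M' J (Pi\<^sub>E J A))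
      = emeasure (PiM I M) (prod_emb I M J (Pi\<^sub>E J (\<lambda>i. f i -` A i \<inter> space (M i))))"
    by (subst emeasure_distr[OF meas emb]) (simp add: pre)
  also have "\<dots> = (\<Prod>i\<in>J. emeasure (M i) (f i -` A i \<inter> space (M i)))"
    using J A by (intro emeasure_PiM_emb M) (auto intro: measurable_sets[OF f])
  also have "\<dots> = (\<Prod>i\<in>J. emeasure (distr (M i) (M' i) (f i)) (A i))"
    using J A by (intro prod.cong emeasure_distr[symmetric]) (auto intro: f)
  also have "\<dots> = emeasure (PiM I (\<lambda>i. distr (M i) (M' i) (f i))) (prod_emb I (\<lambda>i. distr (M i) (M' i) (f i)) J (Pi\<^sub>E J A))"
    using J A by (intro emeasure_PiM_emb[symmetric] prob_space.prob_space_distr M f) auto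
  also have "prod_emb I (\<lambda>i. distr (M i) (M' i) (f i)) J (Pi\<^sub>E J A) = prod_emb I M' J (Pi\<^sub>E J A)"
    by (auto simp: prod_emb_def)
  finally show "emeasure (distr (PiM I M) (PiM I M') (\<lambda>z. \<lambda>i\<in>I. f i (z i))) (prod_emb I M' J (Pi\<^sub>E J A)) =
    emeasure (PiM I (\<lambda>i. distr (M i) (M' i) (f i))) (prod_emb I M' J (Pi\<^sub>E J A))" .
qed

lemma prob_gamma[simp]: "prob_space (gamma_dist a)"
  unfolding gamma_dist_def by (rule prob_space_erlang_density) simp

lemma sets_gamma[simp, measurable_cong]: "sets (gamma_dist a) = sets borel"
  and space_gamma[simp]: "space (gamma_dist a) = UNIV"
  by (simp_all add: gamma_dist_def)

lemma gamma_conv: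
  assumes "m \<ge> 1" "e \<ge> 1"
  shows "distr (gamma_dist m \<Otimes>\<^sub>M gamma_dist e) borel (\<lambda>(x,y). x + y) = gamma_dist (m + e)"
proof -
  have "distr (gamma_dist m \<Otimes>\<^sub>M gamma_dist e) borel (\<lambda>(x,y). x + y) = convolution (gamma_dist m) (gamma_dist e)"
    by (simp add: convolution_def)
  also have "\<dots> = density lborel (\<lambda>x. \<integral>\<^sup>+y. ennreal (erlang_density (m-1) 1 (x - y)) * ennreal (erlang_density (e-1) 1 y) \<partial>lborel)"
    unfolding gamma_dist_def
    by (rule convolution_density) (auto intro!: prob_space.finite_measure prob_space_erlang_density)
  also have "\<dots> = density lborel (erlang_density (Suc (m-1) + Suc (e-1) - 1) 1)"
    by (subst convolution_erlang_density) auto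
  also have "Suc (m-1) + Suc (e-1) - 1 = m + e - 1" using assms by simp
  finally show ?thesis by (simp add: gamma_dist_def)
qed

lemma gamma_max0: "distr (gamma_dist e) borel (\<lambda>x. max 0 x) = gamma_dist e"
proof (rule measure_eqI)
  fix A assume "A \<in> sets (distr (gamma_dist e) borel (\<lambda>x. max 0 x))"
  then have A[measurable]: "A \<in> sets borel" by simp
  have mx: "(\<lambda>x::real. max 0 x) \<in> borel_measurable borel" by measurable
  have pre: "(\<lambda>x::real. max 0 x) -` A \<in> sets borel" using measurable_sets[OF mx A] by simp
  have "emeasure (distr (gamma_dist e) borel (\<lambda>x. max 0 x)) A = emeasure (gamma_dist e) ((\<lambda>x. max 0 x) -` A)"
    by (subst emeasure_distr) (auto simp: measurable_cong_sets[OF sets_gamma refl] mx)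
  also have "\<dots> = (\<integral>\<^sup>+x. ennreal (erlang_density (e-1) 1 x) * indicator ((\<lambda>x. max 0 x) -` A) x \<partial>lborel)"
    unfolding gamma_dist_def by (subst emeasure_density) (auto simp: pre)
  also have "\<dots> = (\<integral>\<^sup>+x. ennreal (erlang_density (e-1) 1 x) * indicator A x \<partial>lborel)"
    by (intro nn_integral_cong) (auto simp: erlang_density_def indicator_def max_def)
  also have "\<dots> = emeasure (gamma_dist e) A"
    unfolding gamma_dist_def by (subst emeasure_density) auto
  finally show "emeasure (distr (gamma_dist e) borel (\<lambda>x. max 0 x)) A = emeasure (gamma_dist e) A" .
qed simp

lemma site_H_gen:
  assumes m: "m \<ge> 1" and R: "prob_space R" and w[measurable]: "w \<in> borel_measurable R"
    and wd: "distr R borel w = gamma_dist e"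
  shows "distr (gamma_dist m \<Otimes>\<^sub>M R) borel (\<lambda>(a,r). a + (if e = 0 then 0 else w r)) = gamma_dist (m + e)"
proof (cases "e = 0")
  case True
  interpret R: prob_space R by fact
  have "distr (gamma_dist m \<Otimes>\<^sub>M R) borel (\<lambda>(a,r). a + (if e = 0 then 0 else w r))
      = distr (gamma_dist m \<Otimes>\<^sub>M R) (gamma_dist m) fst"
    using True by (intro distr_cong) auto
  also have "\<dots> = gamma_dist m" by (rule R.distr_pair_fst)
  finally show ?thesis using True by simp
next
  case False
  interpret R: prob_space R by fact
  have "distr (gamma_dist m \<Otimes>\<^sub>M R) borel (\<lambda>(a,r). a + (if e = 0 then 0 else w r))
      = distr (distr (gamma_dist m \<Otimes>\<^sub>M R) (borel \<Otimes>\<^sub>M borel) (\<lambda>(a,r). ((\<lambda>x. x) a, w r))) borel (\<lambda>(x,y). x + y)"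
    using False by (subst distr_distr) (auto simp: o_def split_beta')
  also have "distr (gamma_dist m \<Otimes>\<^sub>M R) (borel \<Otimes>\<^sub>M borel) (\<lambda>(a,r). ((\<lambda>x. x) a, w r))
      = distr (gamma_dist m) borel (\<lambda>x. x) \<Otimes>\<^sub>M distr R borel w"
    by (rule pair_measure_distr[symmetric]) (auto simp: wd intro: prob_space_imp_sigma_finite)
  also have "distr (gamma_dist m) borel (\<lambda>x. x) = gamma_dist m"
    by (rule distr_id2) simp
  also have "distr (gamma_dist m \<Otimes>\<^sub>M distr R borel w) borel (\<lambda>(x,y). x + y) = gamma_dist (m + e)"
    using m False by (simp add: wd gamma_conv)
  finally show ?thesis .
qed

lemma inv_anti: "b \<le> b' \<Longrightarrow> inverse b' \<le> inverse (b::ennreal)"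
  apply (cases "b = 0", simp)
  apply (cases b' rule: ennreal_cases; cases b rule: ennreal_cases)
    apply (auto simp: inverse_ennreal)
  by (metis top.extremum_uniqueI top_neq_ennreal)

lemma div_mono_ennreal: "a' \<le> a \<Longrightarrow> b \<le> b' \<Longrightarrow> a'/b' \<le> (a::ennreal)/b"
  unfolding divide_ennreal_def by (intro mult_mono inv_anti) auto

lemma distr_snd_prob:
  assumes "prob_space A" "prob_space B"
  shows "distr (A \<Otimes>\<^sub>M B) B snd = B"
proof (rule measure_eqI)
  interpret A: prob_space A by fact
  interpret B: prob_space B by fact
  fix X assume "X \<in> sets (distr (A \<Otimes>\<^sub>M B) B snd)"
  then have X: "X \<in> sets B" by simp
  have "snd -` X \<inter> space (A \<Otimes>\<^sub>M B) = space A \<times> X"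
    using sets.sets_into_space[OF X] by (auto simp: space_pair_measure)
  then show "emeasure (distr (A \<Otimes>\<^sub>M B) B snd) X = emeasure B X"
    using X by (simp add: emeasure_distr B.emeasure_pair_measure_Times A.emeasure_space_1)
qed simp

lemma gamma_pair_fst_max: "distr (gamma_dist e \<Otimes>\<^sub>M gamma_dist e') borel (\<lambda>(b,b'). max 0 b) = gamma_dist e"
proof -
  interpret pg: prob_space "gamma_dist e'" by simp
  have "distr (gamma_dist e \<Otimes>\<^sub>M gamma_dist e') borel (\<lambda>(b,b'). max 0 b)
     = distr (distr (gamma_dist e \<Otimes>\<^sub>M gamma_dist e') (gamma_dist e) fst) borel (\<lambda>b. max 0 b)"
    by (subst distr_distr) (auto simp: o_def split_beta' measurable_cong_sets[OF sets_gamma refl])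
  also have "distr (gamma_dist e \<Otimes>\<^sub>M gamma_dist e') (gamma_dist e) fst = gamma_dist e"
    by (rule pg.distr_pair_fst)
  finally show ?thesis using gamma_max0 by (metis (no_types) distr_cong sets_gamma)
qed

lemma gamma_pair_snd_max: "distr (gamma_dist e \<Otimes>\<^sub>M gamma_dist e') borel (\<lambda>(b,b'). max 0 b') = gamma_dist e'"
proof -
  have "distr (gamma_dist e \<Otimes>\<^sub>M gamma_dist e') borel (\<lambda>(b,b'). max 0 b')
     = distr (distr (gamma_dist e \<Otimes>\<^sub>M gamma_dist e') (gamma_dist e') snd) borel (\<lambda>b. max 0 b)"
    by (subst distr_distr) (auto simp: o_def split_beta' measurable_cong_sets[OF sets_gamma refl])
  also have "distr (gamma_dist e \<Otimes>\<^sub>M gamma_dist e') (gamma_dist e') snd = gamma_dist e'"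
    by (rule distr_snd_prob) simp_all
  finally show ?thesis using gamma_max0 by (metis (no_types) distr_cong sets_gamma)
qed

lemma site_T:
  assumes m: "m \<ge> 1" and p: "\<psi> \<ge> 1"
  shows "distr ((gamma_dist m \<Otimes>\<^sub>M (gamma_dist e \<Otimes>\<^sub>M gamma_dist e')) \<Otimes>\<^sub>M (gamma_dist \<psi> \<Otimes>\<^sub>M gamma_dist d)) (borel \<Otimes>\<^sub>M borel)
     (\<lambda>(H,G). (fst H + (if e = 0 then 0 else max 0 (fst (snd H))), fst G)) = gamma_dist (m+e) \<Otimes>\<^sub>M gamma_dist \<psi>"
proof -
  let ?H = "gamma_dist m \<Otimes>\<^sub>M (gamma_dist e \<Otimes>\<^sub>M gamma_dist e')"
  let ?G = "gamma_dist \<psi> \<Otimes>\<^sub>M gamma_dist d"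
  have h: "distr ?H borel (\<lambda>H. fst H + (if e = 0 then 0 else max 0 (fst (snd H)))) = gamma_dist (m+e)"
  proof -
    have "distr ?H borel (\<lambda>H. fst H + (if e = 0 then 0 else max 0 (fst (snd H))))
      = distr ?H borel (\<lambda>(a,r). a + (if e = 0 then 0 else (\<lambda>(b,b'). max 0 b) r))"
      by (rule arg_cong[where f="distr ?H borel"]) (auto simp: fun_eq_iff split: prod.splits)
    also have "\<dots> = gamma_dist (m+e)"
      by (rule site_H_gen[OF m]) (auto simp: gamma_pair_fst_max prob_space_pair)
    finally show ?thesis .
  qed
  interpret pd: prob_space "gamma_dist d" by simp
  have g: "distr ?G borel fst = gamma_dist \<psi>"
    using pd.distr_pair_fst[of "gamma_dist \<psi>"] by (metis (no_types) distr_cong sets_gamma)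
  have "distr (?H \<Otimes>\<^sub>M ?G) (borel \<Otimes>\<^sub>M borel)
     (\<lambda>(H,G). (fst H + (if e = 0 then 0 else max 0 (fst (snd H))), fst G))
     = distr ?H borel (\<lambda>H. fst H + (if e = 0 then 0 else max 0 (fst (snd H)))) \<Otimes>\<^sub>M distr ?G borel fst"
    by (rule pair_measure_distr[symmetric]) (auto simp: g intro: prob_space_imp_sigma_finite)
  also have "\<dots> = gamma_dist (m+e) \<Otimes>\<^sub>M gamma_dist \<psi>" by (simp add: h g)
  finally show ?thesis .
qed

lemma site_T':
  assumes m: "m \<ge> 1" and p: "\<psi> \<ge> 1"
  shows "distr ((gamma_dist m \<Otimes>\<^sub>M (gamma_dist e \<Otimes>\<^sub>M gamma_dist e')) \<Otimes>\<^sub>M (gamma_dist \<psi> \<Otimes>\<^sub>M gamma_dist d)) (borel \<Otimes>\<^sub>M borel)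
     (\<lambda>(H,G). (fst H + (if e' = 0 then 0 else max 0 (snd (snd H))), fst G + (if d = 0 then 0 else max 0 (snd G))))
     = gamma_dist (m+e') \<Otimes>\<^sub>M gamma_dist (\<psi>+d)"
proof -
  let ?H = "gamma_dist m \<Otimes>\<^sub>M (gamma_dist e \<Otimes>\<^sub>M gamma_dist e')"
  let ?G = "gamma_dist \<psi> \<Otimes>\<^sub>M gamma_dist d"
  have h: "distr ?H borel (\<lambda>H. fst H + (if e' = 0 then 0 else max 0 (snd (snd H)))) = gamma_dist (m+e')"
  proof -
    have "distr ?H borel (\<lambda>H. fst H + (if e' = 0 then 0 else max 0 (snd (snd H))))
      = distr ?H borel (\<lambda>(a,r). a + (if e' = 0 then 0 else (\<lambda>(b,b'). max 0 b') r))"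
      by (rule arg_cong[where f="distr ?H borel"]) (auto simp: fun_eq_iff split: prod.splits)
    also have "\<dots> = gamma_dist (m+e')"
      by (rule site_H_gen[OF m]) (auto simp: gamma_pair_snd_max prob_space_pair)
    finally show ?thesis .
  qed
  have g: "distr ?G borel (\<lambda>G. fst G + (if d = 0 then 0 else max 0 (snd G))) = gamma_dist (\<psi>+d)"
  proof -
    have "distr ?G borel (\<lambda>G. fst G + (if d = 0 then 0 else max 0 (snd G)))
      = distr ?G borel (\<lambda>(a,r). a + (if d = 0 then 0 else (\<lambda>b. max 0 b) r))"
      by (simp add: split_beta')
    also have "\<dots> = gamma_dist (\<psi>+d)"
      by (rule site_H_gen[OF p]) (auto simp: gamma_max0)
    finally show ?thesis .
  qed
  have "distr (?H \<Otimes>\<^sub>M ?G) (borel \<Otimes>\<^sub>M borel)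
     (\<lambda>(H,G). (fst H + (if e' = 0 then 0 else max 0 (snd (snd H))), fst G + (if d = 0 then 0 else max 0 (snd G))))
     = distr ?H borel (\<lambda>H. fst H + (if e' = 0 then 0 else max 0 (snd (snd H)))) \<Otimes>\<^sub>M
       distr ?G borel (\<lambda>G. fst G + (if d = 0 then 0 else max 0 (snd G)))"
    by (rule pair_measure_distr[symmetric]) (auto simp: g intro: prob_space_imp_sigma_finite)
  also have "\<dots> = gamma_dist (m+e') \<Otimes>\<^sub>M gamma_dist (\<psi>+d)" by (simp add: h g)
  finally show ?thesis .
qed

lemma space_mark: "space (mark_measure K \<phi> \<Delta> \<Psi>) = (\<Pi>\<^sub>E i\<in>sites K \<phi>. UNIV)"
  by (auto simp: mark_measure_def space_PiM space_pair_measure PiE_iff split: prod.splits)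

lemma sets_mark: "sets (mark_measure K \<phi> \<Delta> \<Psi>) = sets (PiM (sites K \<phi>) (\<lambda>_. borel \<Otimes>\<^sub>M borel))"
  unfolding mark_measure_def
  by (intro sets_PiM_cong refl) (auto split: prod.splits intro!: sets_pair_measure_cong)

lemma covered_eq: "covered K \<B> \<phi> P \<beta> \<alpha> \<Delta> \<Psi> = covered K \<B> \<phi> P \<beta> \<alpha> \<Delta>' \<Psi>'"
  unfolding covered_def space_mark ..

lemma covered_mono:
  assumes B: "\<B> \<subseteq> {1..K}" and Ppos: "\<forall>k\<in>{1..K}. P k > 0"
  and w': "\<omega>' \<in> covered K \<B> \<phi> P \<beta> \<alpha> \<Delta>' \<Psi>'"
  and w: "\<omega> \<in> space (mark_measure K \<phi> \<Delta> \<Psi>)"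
  and hf: "\<And>k x. k \<in> \<B> \<Longrightarrow> x \<in> \<phi> k \<Longrightarrow> fst (\<omega>' (k,x)) \<le> fst (\<omega> (k,x))"
  and gs: "\<And>i. i \<in> sites K \<phi> \<Longrightarrow> snd (\<omega> i) \<le> snd (\<omega>' i)"
  shows "\<omega> \<in> covered K \<B> \<phi> P \<beta> \<alpha> \<Delta> \<Psi>"
proof -
  from w' obtain k x where k: "k\<in>\<B>" "x \<in> \<phi> k" and gt: "SIR K \<phi> P \<alpha> \<omega>' k x > ennreal (\<beta> k)"
    by (auto simp: covered_def)
  have I: "interference K \<phi> P \<alpha> \<omega> x \<le> interference K \<phi> P \<alpha> \<omega>' x"
    unfolding interference_def
  proof (rule nn_integral_mono)
    fix jy assume "jy \<in> space (count_space {(j,y) \<in> sites K \<phi>. y \<noteq> x})"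
    then have jy: "jy \<in> sites K \<phi>" by auto
    then have "P (fst jy) > 0" using Ppos by (auto simp: sites_def)
    then show "ennreal (P (fst jy) * snd (\<omega> jy) * norm (snd jy) powr -\<alpha>) \<le> ennreal (P (fst jy) * snd (\<omega>' jy) * norm (snd jy) powr -\<alpha>)"
      using gs[OF jy] by (intro ennreal_leI mult_right_mono mult_left_mono) auto
  qed
  have N: "ennreal (P k * fst (\<omega>' (k,x)) * norm x powr -\<alpha>) \<le> ennreal (P k * fst (\<omega> (k,x)) * norm x powr -\<alpha>)"
  proof -
    have "P k > 0" using Ppos k B by auto
    then show ?thesis using hf[OF k] by (intro ennreal_leI mult_right_mono mult_left_mono) auto
  qed
  have "SIR K \<phi> P \<alpha> \<omega>' k x \<le> SIR K \<phi> P \<alpha> \<omega> k x"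
    unfolding SIR_def by (rule div_mono_ennreal[OF N I])
  with gt have "SIR K \<phi> P \<alpha> \<omega> k x > ennreal (\<beta> k)" by (rule less_le_trans)
  with k w show ?thesis unfolding covered_def by blast
qed

lemma meas_PiM_map:
  assumes f: "\<And>i. i \<in> I \<Longrightarrow> f i \<in> measurable (M i) (M' i)"
  shows "(\<lambda>z. \<lambda>i\<in>I. f i (z i)) \<in> measurable (PiM I M) (PiM I M')"
proof (intro measurable_PiM_single')
  fix i assume i: "i \<in> I"
  show "(\<lambda>\<omega>. (\<lambda>i\<in>I. f i (\<omega> i)) i) \<in> PiM I M \<rightarrow>\<^sub>M M' i"
    using i measurable_compose[where f="\<lambda>\<omega>. \<omega> i" and g="f i", OF measurable_component_singleton[OF i, of M] f[OF i]] by simp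
next
  show "(\<lambda>z. \<lambda>i\<in>I. f i (z i)) \<in> space (PiM I M) \<rightarrow> (\<Pi>\<^sub>E i\<in>I. space (M' i))"
    by (auto simp: space_PiM PiE_iff measurable_space[OF f])
qed

theorem corollary4:
  fixes K :: nat and \<B> :: "nat set" and Q :: "config measure"
    and P \<beta> :: "nat \<Rightarrow> real" and \<alpha> :: real
    and \<Delta> \<Psi> \<Delta>' \<Psi>' :: "nat \<Rightarrow> nat"
  assumes "\<B> \<subseteq> {1..K}"
    and "prob_space Q" and "sets Q = sets (config_space K)" and "stationary K Q"
    and "\<forall>k\<in>{1..K}. P k > 0 \<and> \<beta> k > 0"
    and "\<forall>k\<in>{1..K}. \<Delta> k > 0 \<and> \<Psi> k > 0 \<and> \<Delta>' k > 0 \<and> \<Psi>' k > 0"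
    and "\<forall>k\<in>\<B>. \<Delta> k \<ge> \<Delta>' k"
    and "\<forall>k\<in>{1..K}. \<Psi> k \<le> \<Psi>' k"
  shows "coverage K \<B> Q P \<beta> \<alpha> \<Delta> \<Psi> \<ge> coverage K \<B> Q P \<beta> \<alpha> \<Delta>' \<Psi>'"
proof -
  note B = assms(1)
  have Ppos: "\<forall>k\<in>{1..K}. P k > 0" using assms(5) by auto
  define m where "m k = min (\<Delta> k) (\<Delta>' k)" for k
  define e where "e k = \<Delta> k - m k" for k
  define e' where "e' k = \<Delta>' k - m k" for k
  define d where "d k = \<Psi>' k - \<Psi> k" for k
  define Src :: "nat \<times> point \<Rightarrow> ((real \<times> real \<times> real) \<times> (real \<times> real)) measure" where
    "Src i = (gamma_dist (m (fst i)) \<Otimes>\<^sub>M (gamma_dist (e (fst i)) \<Otimes>\<^sub>M gamma_dist (e' (fst i))))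
       \<Otimes>\<^sub>M (gamma_dist (\<Psi> (fst i)) \<Otimes>\<^sub>M gamma_dist (d (fst i)))" for i
  define T :: "nat \<times> point \<Rightarrow> (real \<times> real \<times> real) \<times> (real \<times> real) \<Rightarrow> real \<times> real" where
    "T i = (\<lambda>(H,G). (fst H + (if e (fst i) = 0 then 0 else max 0 (fst (snd H))), fst G))" for i
  define T' :: "nat \<times> point \<Rightarrow> (real \<times> real \<times> real) \<times> (real \<times> real) \<Rightarrow> real \<times> real" where
    "T' i = (\<lambda>(H,G). (fst H + (if e' (fst i) = 0 then 0 else max 0 (snd (snd H))),
                       fst G + (if d (fst i) = 0 then 0 else max 0 (snd G))))" for i
  have probS: "prob_space (Src i)" for i
    unfolding Src_def by (intro prob_space_pair) simp_all
  have TM: "T i \<in> measurable (Src i) (borel \<Otimes>\<^sub>M borel)" for i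
    unfolding T_def Src_def by measurable
  have TM': "T' i \<in> measurable (Src i) (borel \<Otimes>\<^sub>M borel)" for i
    unfolding T'_def Src_def by measurable
  have key: "emeasure (mark_measure K \<phi> \<Delta>' \<Psi>') (covered K \<B> \<phi> P \<beta> \<alpha> \<Delta>' \<Psi>')
      \<le> emeasure (mark_measure K \<phi> \<Delta> \<Psi>) (covered K \<B> \<phi> P \<beta> \<alpha> \<Delta> \<Psi>)" for \<phi>
  proof -
    let ?I = "sites K \<phi>"
    let ?S = "PiM ?I Src"
    let ?N = "PiM ?I (\<lambda>_. borel \<Otimes>\<^sub>M borel) :: marks measure"
    let ?Tm = "\<lambda>z. \<lambda>i\<in>?I. T i (z i)"
    let ?Tm' = "\<lambda>z. \<lambda>i\<in>?I. T' i (z i)"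
    have kI: "fst i \<in> {1..K}" if "i \<in> ?I" for i using that by (auto simp: sites_def)
    have M1: "mark_measure K \<phi> \<Delta> \<Psi> = distr ?S ?N ?Tm"
    proof -
      have "distr ?S ?N ?Tm = PiM ?I (\<lambda>i. distr (Src i) (borel \<Otimes>\<^sub>M borel) (T i))"
        by (rule distr_PiM_prob[OF probS TM])
      also have "\<dots> = mark_measure K \<phi> \<Delta> \<Psi>"
        unfolding mark_measure_def
      proof (rule PiM_cong[OF refl])
        fix i assume i: "i \<in> ?I"
        have pos: "\<Delta> (fst i) > 0" "\<Psi> (fst i) > 0" "\<Delta>' (fst i) > 0" "\<Psi> (fst i) \<le> \<Psi>' (fst i)"
          using kI[OF i] assms(6,8) by auto
        have "m (fst i) \<ge> 1" "\<Psi> (fst i) \<ge> 1" "m (fst i) + e (fst i) = \<Delta> (fst i)"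
          using pos by (auto simp: m_def e_def)
        then show "distr (Src i) (borel \<Otimes>\<^sub>M borel) (T i) =
            (case i of (k, x) \<Rightarrow> gamma_dist (\<Delta> k) \<Otimes>\<^sub>M gamma_dist (\<Psi> k))"
          unfolding Src_def T_def using site_T[of "m (fst i)" "\<Psi> (fst i)" "e (fst i)" "e' (fst i)" "d (fst i)"]
          by (simp add: case_prod_beta)
      qed
      finally show ?thesis ..
    qed
    have M2: "mark_measure K \<phi> \<Delta>' \<Psi>' = distr ?S ?N ?Tm'"
    proof -
      have "distr ?S ?N ?Tm' = PiM ?I (\<lambda>i. distr (Src i) (borel \<Otimes>\<^sub>M borel) (T' i))"
        by (rule distr_PiM_prob[OF probS TM'])
      also have "\<dots> = mark_measure K \<phi> \<Delta>' \<Psi>'"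
        unfolding mark_measure_def
      proof (rule PiM_cong[OF refl])
        fix i assume i: "i \<in> ?I"
        have pos: "\<Delta> (fst i) > 0" "\<Psi> (fst i) > 0" "\<Delta>' (fst i) > 0" "\<Psi> (fst i) \<le> \<Psi>' (fst i)"
          using kI[OF i] assms(6,8) by auto
        have "m (fst i) \<ge> 1" "\<Psi> (fst i) \<ge> 1" "m (fst i) + e' (fst i) = \<Delta>' (fst i)"
             "\<Psi> (fst i) + d (fst i) = \<Psi>' (fst i)"
          using pos by (auto simp: m_def e'_def d_def)
        then show "distr (Src i) (borel \<Otimes>\<^sub>M borel) (T' i) =
            (case i of (k, x) \<Rightarrow> gamma_dist (\<Delta>' k) \<Otimes>\<^sub>M gamma_dist (\<Psi>' k))"
          unfolding Src_def T'_def using site_T'[of "m (fst i)" "\<Psi> (fst i)" "e (fst i)" "e' (fst i)" "d (fst i)"]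
          by (simp add: case_prod_beta)
      qed
      finally show ?thesis ..
    qed
    let ?C = "covered K \<B> \<phi> P \<beta> \<alpha> \<Delta> \<Psi>"
    have CC: "covered K \<B> \<phi> P \<beta> \<alpha> \<Delta>' \<Psi>' = ?C" by (rule covered_eq)
    have mTm: "?Tm \<in> measurable ?S ?N" and mTm': "?Tm' \<in> measurable ?S ?N"
      by (intro meas_PiM_map TM TM')+
    show ?thesis
    proof (cases "?C \<in> sets ?N")
      case False
      then have "?C \<notin> sets (mark_measure K \<phi> \<Delta>' \<Psi>')" by (simp add: sets_mark)
      then show ?thesis by (simp add: CC emeasure_notin_sets)
    next
      case True
      have sub: "?Tm' -` ?C \<inter> space ?S \<subseteq> ?Tm -` ?C \<inter> space ?S"
      proof
        fix z assume z: "z \<in> ?Tm' -` ?C \<inter> space ?S"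
        have "?Tm z \<in> ?C"
        proof (rule covered_mono[OF B Ppos])
          show "?Tm' z \<in> covered K \<B> \<phi> P \<beta> \<alpha> \<Delta>' \<Psi>'" using z CC by simp
          show "?Tm z \<in> space (mark_measure K \<phi> \<Delta> \<Psi>)" by (simp add: space_mark)
          fix k x assume kx: "k \<in> \<B>" "x \<in> \<phi> k"
          then have "(k,x) \<in> ?I" using B by (auto simp: sites_def)
          moreover have "e' k = 0" using kx assms(7) by (auto simp: e'_def m_def)
          ultimately show "fst (?Tm' z (k,x)) \<le> fst (?Tm z (k,x))"
            by (simp add: T_def T'_def case_prod_beta)
        next
          fix i assume "i \<in> ?I"
          then show "snd (?Tm z i) \<le> snd (?Tm' z i)"
            by (simp add: T_def T'_def case_prod_beta)
        qed
        then show "z \<in> ?Tm -` ?C \<inter> space ?S" using z by simp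
      qed
      have "emeasure (mark_measure K \<phi> \<Delta>' \<Psi>') (covered K \<B> \<phi> P \<beta> \<alpha> \<Delta>' \<Psi>')
          = emeasure ?S (?Tm' -` ?C \<inter> space ?S)"
        unfolding M2 CC by (rule emeasure_distr[OF mTm' True])
      also have "\<dots> \<le> emeasure ?S (?Tm -` ?C \<inter> space ?S)"
        by (rule emeasure_mono[OF sub measurable_sets[OF mTm True]])
      also have "\<dots> = emeasure (mark_measure K \<phi> \<Delta> \<Psi>) ?C"
        unfolding M1 by (rule emeasure_distr[OF mTm True, symmetric])
      finally show ?thesis .
    qed
  qed
  show ?thesis unfolding coverage_def by (intro nn_integral_mono key)
qed

end
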